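(* Consider the random basic walk on the infinite hexagonal lattice (the $3$-regular planar honeycomb graph). For any starting vertex and any initial port, the random basic walk cycles with probability $1$.
   Context: Graphs are connected, countable and locally finite; each undirected edge $\{v,w\}$ is regarded as two arcs $v\to w$ and $w\to v$. A labeling assigns, at each vertex $v$ of degree $\deg(v)$, the port numbers $1,\dots,\deg(v)$ bijectively to the arcs leaving $v$ (labels on $v\to w$ and $w\to v$ need not agree). In a random labeling these bijections are chosen uniformly at random, independently for different vertices. Given a labeling, a starting vertex $v_0$ and an initial port $\ell$, the basic walk leaves $v_0$ along the arc labeled $\ell$; thereafter, whenever it enters a vertex $v$ along an arc whose label is $i$, it leaves $v$ along the arc out of $v$ labeled $(i \bmod \deg(v))+1$. The random basic walk is the basic walk for a random labeling. The walk cycles if some arc is traversed twice in the same direction (equivalently, from some point on it is periodic and visits only finitely many vertices); it is transient otherwise. *)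

theory Defs
  imports "HOL-Probability.Probability"
begin

text \<open>A graph is given by its neighbourhood function nbrs (symmetric, locally finite).
  A labeling is a function P with P v w the port number, at v, of the arc v->w;
  for fixed v it is a bijection from the neighbours of v onto 1..deg v, and 0 elsewhere.\<close>

definition deg :: "('a \<Rightarrow> 'a set) \<Rightarrow> 'a \<Rightarrow> nat" where
  "deg nbrs v = card (nbrs v)"

definition local_labels :: "('a \<Rightarrow> 'a set) \<Rightarrow> 'a \<Rightarrow> ('a \<Rightarrow> nat) set" where
  "local_labels nbrs v =
     {p. bij_betw p (nbrs v) {1..deg nbrs v} \<and> (\<forall>w. w \<notin> nbrs v \<longrightarrow> p w = 0)}"

definition port_target :: "('a \<Rightarrow> 'a set) \<Rightarrow> ('a \<Rightarrow> 'a \<Rightarrow> nat) \<Rightarrow> 'a \<Rightarrow> nat \<Rightarrow> 'a" where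
  "port_target nbrs P v j = (THE w. w \<in> nbrs v \<and> P v w = j)"

text \<open>The n-th arc traversed by the basic walk started at v0 with initial port l.
  The arc u->v entered has label P u v; the walk then leaves v along the arc labeled
  ((P u v) mod deg v) + 1.\<close>
fun basic_walk :: "('a \<Rightarrow> 'a set) \<Rightarrow> ('a \<Rightarrow> 'a \<Rightarrow> nat) \<Rightarrow> 'a \<Rightarrow> nat \<Rightarrow> nat \<Rightarrow> 'a \<times> 'a" where
  "basic_walk nbrs P v0 l 0 = (v0, port_target nbrs P v0 l)"
| "basic_walk nbrs P v0 l (Suc n) =
     (let (u, v) = basic_walk nbrs P v0 l n
      in (v, port_target nbrs P v ((P u v mod deg nbrs v) + 1)))"

definition walk_cycles :: "('a \<Rightarrow> 'a set) \<Rightarrow> ('a \<Rightarrow> 'a \<Rightarrow> nat) \<Rightarrow> 'a \<Rightarrow> nat \<Rightarrow> bool" where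
  "walk_cycles nbrs P v0 l \<longleftrightarrow>
     (\<exists>m n. m < n \<and> basic_walk nbrs P v0 l m = basic_walk nbrs P v0 l n)"

definition random_labeling :: "('a \<Rightarrow> 'a set) \<Rightarrow> ('a \<Rightarrow> 'a \<Rightarrow> nat) measure" where
  "random_labeling nbrs = PiM UNIV (\<lambda>v. measure_pmf (pmf_of_set (local_labels nbrs v)))"

text \<open>Brick-wall model of the honeycomb: vertices (i,j,b); the black vertex (i,j,False)
  is adjacent to the white vertices (i,j,True), (i-1,j,True), (i,j-1,True).\<close>
type_synonym hexv = "int \<times> int \<times> bool"

definition hex_nbrs :: "hexv \<Rightarrow> hexv set" where
  "hex_nbrs v = (case v of
      (i, j, False) \<Rightarrow> {(i, j, True), (i - 1, j, True), (i, j - 1, True)}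
    | (i, j, True) \<Rightarrow> {(i, j, False), (i + 1, j, False), (i, j + 1, False)})"

end

theory Submission
  imports Defs
begin

lemma hex_nbrs_cases:
  "hex_nbrs (i,j,False) = {(i, j, True), (i - 1, j, True), (i, j - 1, True)}"
  "hex_nbrs (i,j,True) = {(i, j, False), (i + 1, j, False), (i, j + 1, False)}"
  by (simp_all add: hex_nbrs_def)

lemma finite_hex_nbrs[simp]: "finite (hex_nbrs v)"
  by (cases v) (auto simp: hex_nbrs_def split: bool.splits)

lemma deg_hex[simp]: "deg hex_nbrs v = 3"
  by (cases v) (auto simp: hex_nbrs_def deg_def split: bool.splits)

lemma hex_sym: "w \<in> hex_nbrs v \<Longrightarrow> v \<in> hex_nbrs w"
  by (cases v; cases w) (auto simp: hex_nbrs_def split: bool.splits if_splits)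

lemma hex_irrefl: "v \<notin> hex_nbrs v"
  by (cases v) (auto simp: hex_nbrs_def split: bool.splits)

definition valid :: "(hexv \<Rightarrow> hexv \<Rightarrow> nat) \<Rightarrow> bool" where
  "valid P \<longleftrightarrow> (\<forall>v. P v \<in> local_labels hex_nbrs v)"

lemma LL_range:
  assumes "p \<in> local_labels hex_nbrs v" "w \<in> hex_nbrs v"
  shows "p w \<in> {1..3}"
  using assms unfolding local_labels_def bij_betw_def by auto

lemma LL_ex:
  assumes "p \<in> local_labels hex_nbrs v" "j \<in> {1..3}"
  shows "\<exists>!w. w \<in> hex_nbrs v \<and> p w = j"
proof -
  from assms have b: "bij_betw p (hex_nbrs v) {1..3}" unfolding local_labels_def by simp
  then obtain w where "w \<in> hex_nbrs v" "p w = j" using assms(2)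
    unfolding bij_betw_def by (metis imageE)
  moreover have "\<And>w'. w' \<in> hex_nbrs v \<Longrightarrow> p w' = j \<Longrightarrow> w' = w"
    using b calculation unfolding bij_betw_def inj_on_def by metis
  ultimately show ?thesis by blast
qed

lemma pt_prop:
  assumes "valid P" "j \<in> {1..3}"
  shows "port_target hex_nbrs P v j \<in> hex_nbrs v \<and> P v (port_target hex_nbrs P v j) = j"
proof -
  have "P v \<in> local_labels hex_nbrs v" using assms(1) unfolding valid_def by blast
  from LL_ex[OF this assms(2)] show ?thesis
    unfolding port_target_def by (rule theI')
qed

lemma pt_eq:
  assumes "valid P" "w \<in> hex_nbrs v" "P v w = j"
  shows "port_target hex_nbrs P v j = w"
proof -
  have "P v \<in> local_labels hex_nbrs v" using assms(1) unfolding valid_def by blast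
  then have j: "j \<in> {1..3}" using LL_range assms by blast
  have "P v \<in> local_labels hex_nbrs v" using assms(1) unfolding valid_def by blast
  from LL_ex[OF this j] assms show ?thesis
    unfolding port_target_def by (metis (mono_tags, lifting) the_equality)
qed

abbreviation bw where "bw P v0 l n \<equiv> basic_walk hex_nbrs P v0 l n"

lemma bw_Suc: "bw P v0 l (Suc n) = (snd (bw P v0 l n),
   port_target hex_nbrs P (snd (bw P v0 l n)) (P (fst (bw P v0 l n)) (snd (bw P v0 l n)) mod 3 + 1))"
  by (simp add: case_prod_beta Let_def)

declare basic_walk.simps(2)[simp del]

lemma fst_bw_Suc: "fst (bw P v0 l (Suc n)) = snd (bw P v0 l n)"
  unfolding bw_Suc by simp

lemma fst_bw_0: "fst (bw P v0 l 0) = v0" by simp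

lemma bw_nbr:
  assumes "valid P" "l \<in> {1..3}"
  shows "snd (bw P v0 l n) \<in> hex_nbrs (fst (bw P v0 l n))"
proof (cases n)
  case 0 then show ?thesis using pt_prop[OF assms] by simp
next
  case (Suc m)
  have "P (fst (bw P v0 l m)) (snd (bw P v0 l m)) mod 3 + 1 \<in> {1..3}" by simp
  from pt_prop[OF assms(1) this] show ?thesis unfolding Suc bw_Suc by simp
qed

definition star :: "(hexv \<Rightarrow> hexv \<Rightarrow> nat) \<Rightarrow> hexv \<Rightarrow> bool" where
  "star P c \<longleftrightarrow> (\<forall>w\<in>hex_nbrs c. P w c mod 3 = (P c w + 1) mod 3)"

lemma star_trap_even:
  assumes "valid P" "l \<in> {1..3}" "star P c" "snd (bw P v0 l n) = c"
  shows "snd (bw P v0 l (n + 2*k)) = c"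
proof (induction k)
  case 0 then show ?case using assms by simp
next
  case (Suc k)
  let ?m = "n + 2*k"
  have x: "fst (bw P v0 l ?m) \<in> hex_nbrs c"
    using bw_nbr[OF assms(1,2), of v0 ?m] Suc hex_sym by auto
  define y where "y = snd (bw P v0 l (Suc ?m))"
  have fy: "fst (bw P v0 l (Suc ?m)) = c" using Suc fst_bw_Suc by metis
  have y: "y \<in> hex_nbrs c" using bw_nbr[OF assms(1,2), of v0 "Suc ?m"] fy y_def by simp
  have r: "P y c \<in> {1..3}" using assms(1) y hex_sym LL_range valid_def by blast
  have "P y c mod 3 = (P c y + 1) mod 3" using assms(3) y star_def by auto
  then have e: "P c y mod 3 + 1 = P y c" using r by auto presburger
  have "snd (bw P v0 l (Suc (Suc ?m))) = port_target hex_nbrs P y (P c y mod 3 + 1)"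
    using bw_Suc[of P v0 l "Suc ?m"] fy y_def by simp
  also have "\<dots> = c" using pt_eq[OF assms(1)] e hex_sym[OF y] by simp
  finally show ?case by simp
qed

lemma star_trap:
  assumes "valid P" "l \<in> {1..3}" "star P c" "snd (bw P v0 l n) = c" "n \<le> m"
  shows "snd (bw P v0 l m) \<in> insert c (hex_nbrs c)"
proof -
  have "m = n + 2 * ((m-n) div 2) \<or> m = Suc (n + 2*((m-n) div 2))" using \<open>n \<le> m\<close> by presburger
  then obtain k where "m = n + 2*k \<or> m = Suc (n + 2*k)" by blast
  then show ?thesis
  proof
    assume "m = n + 2*k" then show ?thesis using star_trap_even[OF assms(1-4)] by simp
  next
    assume m: "m = Suc (n + 2*k)"
    have "fst (bw P v0 l m) = c" using m fst_bw_Suc star_trap_even[OF assms(1-4)] by metis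
    then show ?thesis using bw_nbr[OF assms(1,2), of v0 m] by simp
  qed
qed

definition hA :: "hexv \<Rightarrow> int" where "hA v = (case v of (i,j,b) \<Rightarrow> 2*(i+j) + (if b then 1 else 0))"
definition hB :: "hexv \<Rightarrow> int" where "hB v = (case v of (i,j,b) \<Rightarrow> -2*i - (if b then 1 else 0))"
definition hC :: "hexv \<Rightarrow> int" where "hC v = (case v of (i,j,b) \<Rightarrow> -2*j - (if b then 1 else 0))"

definition good_fun :: "(hexv \<Rightarrow> int) \<Rightarrow> bool" where
  "good_fun f \<longleftrightarrow> (\<forall>v. \<forall>w\<in>hex_nbrs v. f w = f v + 1 \<or> f w = f v - 1) \<and>
     (\<forall>c. odd (f c) \<longrightarrow> (\<exists>u w1 w2. hex_nbrs c = {u,w1,w2} \<and> u \<noteq> w1 \<and> u \<noteq> w2 \<and> w1 \<noteq> w2 \<and>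
         f u = f c - 1 \<and> f w1 = f c + 1 \<and> f w2 = f c + 1))"

lemma good_hA: "good_fun hA"
  unfolding good_fun_def
proof (intro conjI allI impI ballI)
  fix v w assume "w \<in> hex_nbrs v" then show "hA w = hA v + 1 \<or> hA w = hA v - 1"
    by (cases v) (auto simp: hex_nbrs_def hA_def split: bool.splits)
next
  fix c assume o: "odd (hA c)"
  obtain i j b where c: "c = (i,j,b)" by (cases c)
  with o have b: "b" by (cases b) (auto simp: hA_def)
  show "\<exists>u w1 w2. hex_nbrs c = {u,w1,w2} \<and> u \<noteq> w1 \<and> u \<noteq> w2 \<and> w1 \<noteq> w2 \<and>
         hA u = hA c - 1 \<and> hA w1 = hA c + 1 \<and> hA w2 = hA c + 1"
    by (rule exI[of _ "(i,j,False)"], rule exI[of _ "(i+1,j,False)"], rule exI[of _ "(i,j+1,False)"])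
       (simp add: c b hex_nbrs_def hA_def)
qed

lemma good_hB: "good_fun hB"
  unfolding good_fun_def
proof (intro conjI allI impI ballI)
  fix v w assume "w \<in> hex_nbrs v" then show "hB w = hB v + 1 \<or> hB w = hB v - 1"
    by (cases v) (auto simp: hex_nbrs_def hB_def split: bool.splits)
next
  fix c assume o: "odd (hB c)"
  obtain i j b where c: "c = (i,j,b)" by (cases c)
  with o have b: "b" by (cases b) (auto simp: hB_def)
  show "\<exists>u w1 w2. hex_nbrs c = {u,w1,w2} \<and> u \<noteq> w1 \<and> u \<noteq> w2 \<and> w1 \<noteq> w2 \<and>
         hB u = hB c - 1 \<and> hB w1 = hB c + 1 \<and> hB w2 = hB c + 1"
    by (rule exI[of _ "(i+1,j,False)"], rule exI[of _ "(i,j,False)"], rule exI[of _ "(i,j+1,False)"])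
       (auto simp: c b hex_nbrs_def hB_def)
qed

lemma good_hC: "good_fun hC"
  unfolding good_fun_def
proof (intro conjI allI impI ballI)
  fix v w assume "w \<in> hex_nbrs v" then show "hC w = hC v + 1 \<or> hC w = hC v - 1"
    by (cases v) (auto simp: hex_nbrs_def hC_def split: bool.splits)
next
  fix c assume o: "odd (hC c)"
  obtain i j b where c: "c = (i,j,b)" by (cases c)
  with o have b: "b" by (cases b) (auto simp: hC_def)
  show "\<exists>u w1 w2. hex_nbrs c = {u,w1,w2} \<and> u \<noteq> w1 \<and> u \<noteq> w2 \<and> w1 \<noteq> w2 \<and>
         hC u = hC c - 1 \<and> hC w1 = hC c + 1 \<and> hC w2 = hC c + 1"
    by (rule exI[of _ "(i,j+1,False)"], rule exI[of _ "(i,j,False)"], rule exI[of _ "(i+1,j,False)"])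
       (auto simp: c b hex_nbrs_def hC_def)
qed

lemma finite_box: "finite {v. hA v \<le> B \<and> hB v \<le> B \<and> hC v \<le> B}"
proof -
  let ?K = "\<bar>B\<bar> * 3 + 3"
  have "{v. hA v \<le> B \<and> hB v \<le> B \<and> hC v \<le> B} \<subseteq> {-?K..?K} \<times> {-?K..?K} \<times> (UNIV :: bool set)"
  proof
    fix v assume "v \<in> {v. hA v \<le> B \<and> hB v \<le> B \<and> hC v \<le> B}"
    moreover obtain i j b where "v = (i,j,b)" by (cases v)
    ultimately show "v \<in> {-?K..?K} \<times> {-?K..?K} \<times> (UNIV :: bool set)"
      by (cases b) (auto simp: hA_def hB_def hC_def)
  qed
  then show ?thesis by (rule finite_subset) auto
qed

lemma unbounded:
  assumes "valid P" "\<not> walk_cycles hex_nbrs P v0 l"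
  shows "\<exists>f\<in>{hA,hB,hC}. \<forall>M. \<exists>n. f (snd (bw P v0 l n)) \<ge> M"
proof (rule ccontr)
  assume "\<not> ?thesis"
  then obtain MA MB MC where MA: "\<forall>n. hA (snd (bw P v0 l n)) < MA"
    and MB: "\<forall>n. hB (snd (bw P v0 l n)) < MB" and MC: "\<forall>n. hC (snd (bw P v0 l n)) < MC"
    by (auto simp: not_le)
  define B where "B = max MA (max MB MC)"
  define F where "F = {v. hA v \<le> B \<and> hB v \<le> B \<and> hC v \<le> B}"
  have sF: "snd (bw P v0 l n) \<in> F" for n
    using MA[rule_format, of n] MB[rule_format, of n] MC[rule_format, of n]
    unfolding F_def B_def by (auto simp: le_max_iff_disj)
  have fF: "fst (bw P v0 l n) \<in> insert v0 F" for n
    by (cases n) (auto simp: fst_bw_Suc sF)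
  have "range (bw P v0 l) \<subseteq> insert v0 F \<times> F"
  proof (rule subsetI)
    fix z assume "z \<in> range (bw P v0 l)"
    then obtain n where "z = bw P v0 l n" by blast
    then show "z \<in> insert v0 F \<times> F" using sF[of n] fF[of n] by (simp add: mem_Times_iff)
  qed
  moreover have "finite (insert v0 F \<times> F)" using finite_box unfolding F_def by auto
  ultimately have fin: "finite (range (bw P v0 l))" by (rule finite_subset)
  have "inj (bw P v0 l)"
  proof (rule injI)
    fix m n assume e: "bw P v0 l m = bw P v0 l n"
    show "m = n"
    proof (rule ccontr)
      assume "m \<noteq> n"
      then have "m < n \<or> n < m" by arith
      then show False using e assms(2) unfolding walk_cycles_def by metis
    qed
  qed
  then have "infinite (range (bw P v0 l))" using finite_imageD infinite_UNIV_nat by blast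
  with fin show False by simp
qed

declare split_paired_All[simp del] split_paired_Ex[simp del]

abbreviation LL where "LL v \<equiv> local_labels hex_nbrs v"
abbreviation MM where "MM v \<equiv> measure_pmf (pmf_of_set (LL v))"
abbreviation mu where "mu \<equiv> random_labeling hex_nbrs"

lemma hex_three: "\<exists>a b c. hex_nbrs v = {a,b,c} \<and> a \<noteq> b \<and> a \<noteq> c \<and> b \<noteq> c"
proof -
  obtain i j b where v: "v = (i,j,b)" by (cases v)
  show ?thesis
  proof (cases b)
    case True then show ?thesis
      by (intro exI[of _ "(i,j,False)"] exI[of _ "(i+1,j,False)"] exI[of _ "(i,j+1,False)"])
         (simp add: v hex_nbrs_def)
  next
    case False then show ?thesis
      by (intro exI[of _ "(i,j,True)"] exI[of _ "(i-1,j,True)"] exI[of _ "(i,j-1,True)"])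
         (simp add: v hex_nbrs_def)
  qed
qed

lemma LL_finite: "finite (LL v)"
proof -
  have "LL v \<subseteq> {f. \<forall>x. (x \<in> hex_nbrs v \<longrightarrow> f x \<in> {1..3}) \<and> (x \<notin> hex_nbrs v \<longrightarrow> f x = 0)}"
  proof
    fix p assume p: "p \<in> LL v"
    then show "p \<in> {f. \<forall>x. (x \<in> hex_nbrs v \<longrightarrow> f x \<in> {1..3}) \<and> (x \<notin> hex_nbrs v \<longrightarrow> f x = 0)}"
      using LL_range[of p v] unfolding local_labels_def by blast
  qed
  moreover have "finite {f. \<forall>x. (x \<in> hex_nbrs v \<longrightarrow> f x \<in> {1..3::nat}) \<and> (x \<notin> hex_nbrs v \<longrightarrow> f x = 0)}"
    by (rule finite_set_of_finite_funs) auto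
  ultimately show ?thesis by (rule finite_subset)
qed

lemma LL_ne: "LL v \<noteq> {}"
proof -
  obtain a b c where abc: "hex_nbrs v = {a,b,c}" "a \<noteq> b" "a \<noteq> c" "b \<noteq> c" using hex_three by blast
  define p :: "hexv \<Rightarrow> nat" where "p = (\<lambda>w. if w = a then 1 else if w = b then 2 else if w = c then 3 else 0)"
  have pa: "p a = 1" "p b = 2" "p c = 3" using abc(2-4) by (simp_all add: p_def)
  have i: "inj_on p {a,b,c}" unfolding inj_on_def using pa by auto
  have im: "p ` {a,b,c} = {1..3}" using pa by auto
  have "bij_betw p (hex_nbrs v) {1..3}" unfolding bij_betw_def abc(1) using i im by simp
  moreover have "\<forall>w. w \<notin> hex_nbrs v \<longrightarrow> p w = 0" unfolding abc(1) p_def by simp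
  ultimately have "p \<in> LL v" unfolding local_labels_def by simp
  then show ?thesis by blast
qed

definition rot :: "hexv \<Rightarrow> (hexv \<Rightarrow> nat) \<Rightarrow> (hexv \<Rightarrow> nat)" where
  "rot v p = (\<lambda>w. if w \<in> hex_nbrs v then p w mod 3 + 1 else 0)"

lemma rot_LL: assumes "p \<in> LL v" shows "rot v p \<in> LL v"
proof -
  have b: "bij_betw p (hex_nbrs v) {1..3}" using assms unfolding local_labels_def by simp
  have "{1..3::nat} = {1,2,3}" by auto
  then have r: "bij_betw (\<lambda>k::nat. k mod 3 + 1) {1..3} {1..3}"
    unfolding bij_betw_def inj_on_def by auto
  have "bij_betw ((\<lambda>k::nat. k mod 3 + 1) \<circ> p) (hex_nbrs v) {1..3}"
    by (rule bij_betw_trans[OF b r])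
  then have "bij_betw (rot v p) (hex_nbrs v) {1..3}"
    by (rule bij_betw_cong[THEN iffD1, rotated]) (simp add: rot_def)
  then show ?thesis unfolding local_labels_def by (simp add: rot_def)
qed

lemma rot_rot_rot: assumes "p \<in> LL v" shows "rot v (rot v (rot v p)) = p"
proof
  fix w show "rot v (rot v (rot v p)) w = p w"
  proof (cases "w \<in> hex_nbrs v")
    case True
    then have "p w \<in> {1..3}" using LL_range assms by blast
    then have "p w = 1 \<or> p w = 2 \<or> p w = 3" by auto
    then show ?thesis using True by (auto simp: rot_def)
  next
    case False then show ?thesis using assms by (simp add: rot_def local_labels_def)
  qed
qed

lemma rot_val: "s \<in> hex_nbrs v \<Longrightarrow> rot v p s mod 3 = (p s mod 3 + 1) mod 3"
  by (simp add: rot_def)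

lemma card_class_eq:
  assumes s: "s \<in> hex_nbrs v" and r: "r < 3"
  shows "card (LL v \<inter> {p. p s mod 3 = r}) = card (LL v \<inter> {p. p s mod 3 = (r + 1) mod 3})"
proof -
  have "bij_betw (rot v) (LL v \<inter> {p. p s mod 3 = r}) (LL v \<inter> {p. p s mod 3 = (r + 1) mod 3})"
    unfolding bij_betw_def
  proof
    show "inj_on (rot v) (LL v \<inter> {p. p s mod 3 = r})"
      by (rule inj_on_inverseI[where g = "\<lambda>p. rot v (rot v p)"]) (simp add: rot_rot_rot)
    show "rot v ` (LL v \<inter> {p. p s mod 3 = r}) = LL v \<inter> {p. p s mod 3 = (r + 1) mod 3}"
    proof
      show "rot v ` (LL v \<inter> {p. p s mod 3 = r}) \<subseteq> LL v \<inter> {p. p s mod 3 = (r + 1) mod 3}"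
      proof (rule image_subsetI)
        fix p assume "p \<in> LL v \<inter> {p. p s mod 3 = r}"
        then show "rot v p \<in> LL v \<inter> {p. p s mod 3 = (r + 1) mod 3}"
          using rot_LL[of p v] rot_val[OF s, of p] by auto
      qed
      show "LL v \<inter> {p. p s mod 3 = (r + 1) mod 3} \<subseteq> rot v ` (LL v \<inter> {p. p s mod 3 = r})"
      proof
        fix q assume q: "q \<in> LL v \<inter> {p. p s mod 3 = (r + 1) mod 3}"
        define p where "p = rot v (rot v q)"
        have e1: "p s mod 3 = ((q s mod 3 + 1) mod 3 + 1) mod 3" using rot_val[OF s] unfolding p_def by simp
        have e2: "q s mod 3 = (r + 1) mod 3" using q by simp
        have e3: "p s mod 3 = r" using r e1 e2 by presburger
        have "rot v p = q" using q rot_rot_rot unfolding p_def by auto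
        moreover have "p \<in> LL v" using q rot_LL p_def by auto
        ultimately show "q \<in> rot v ` (LL v \<inter> {p. p s mod 3 = r})" using e3 by blast
      qed
    qed
  qed
  then show ?thesis by (rule bij_betw_same_card)
qed

lemma class_third:
  assumes s: "s \<in> hex_nbrs v" and r: "r < 3"
  shows "emeasure (MM v) {p. p s mod 3 = r} = ennreal (1/3)"
proof -
  define k where "k = card (LL v \<inter> {p. p s mod 3 = 0})"
  have k: "card (LL v \<inter> {p. p s mod 3 = r'}) = k" if "r' < 3" for r'
  proof -
    have "r' = 0 \<or> r' = 1 \<or> r' = 2" using that by auto
    moreover have "card (LL v \<inter> {p. p s mod 3 = 0}) = card (LL v \<inter> {p. p s mod 3 = 1})"
      using card_class_eq[OF s, of 0] by simp
    moreover have "card (LL v \<inter> {p. p s mod 3 = 1}) = card (LL v \<inter> {p. p s mod 3 = 2})"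
      using card_class_eq[OF s, of 1] by (simp add: numeral_2_eq_2)
    ultimately show ?thesis unfolding k_def by auto
  qed
  define A0 where "A0 = LL v \<inter> {p. p s mod 3 = 0}"
  define A1 where "A1 = LL v \<inter> {p. p s mod 3 = 1}"
  define A2 where "A2 = LL v \<inter> {p. p s mod 3 = 2}"
  have U: "LL v = (A0 \<union> A1) \<union> A2" unfolding A0_def A1_def A2_def by auto
  have f: "finite A0" "finite A1" "finite A2" unfolding A0_def A1_def A2_def using LL_finite by auto
  have d: "A0 \<inter> A1 = {}" "(A0 \<union> A1) \<inter> A2 = {}" unfolding A0_def A1_def A2_def by auto
  have "card (LL v) = card (A0 \<union> A1) + card A2" unfolding U using f d by (simp add: card_Un_disjoint)
  also have "\<dots> = card A0 + card A1 + card A2" using f d by (simp add: card_Un_disjoint)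
  finally have "card (LL v) = k + k + k" using k[of 0] k[of 1] k[of 2] unfolding A0_def A1_def A2_def by simp
  then have cL: "card (LL v) = 3 * k" by simp
  have "card (LL v) > 0" using LL_finite LL_ne card_gt_0_iff by blast
  then have kp: "k > 0" using cL by simp
  show ?thesis
    using emeasure_pmf_of_set[OF LL_ne LL_finite, of v "{p. p s mod 3 = r}"] k[OF r] cL kp
    by (simp add: ennreal_of_nat_eq_real_of_nat)
qed

lemma prob_mu: "prob_space mu"
  unfolding random_labeling_def by (rule prob_space_PiM) (simp add: prob_space_measure_pmf)

lemma space_mu[simp]: "space mu = UNIV"
  by (simp add: random_labeling_def space_PiM PiE_UNIV_domain)

lemma sets_mu_eq: "sets mu = sets (PiM UNIV MM)"
  by (simp add: random_labeling_def)

lemma meas_coord: "(\<lambda>P. F (P v)) \<in> mu \<rightarrow>\<^sub>M count_space UNIV"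
proof -
  have "(\<lambda>P. P v) \<in> mu \<rightarrow>\<^sub>M MM v" unfolding random_labeling_def
    by (rule measurable_component_singleton) simp
  moreover have "F \<in> MM v \<rightarrow>\<^sub>M count_space UNIV"
    by (simp add: measurable_cong_sets[OF sets_measure_pmf_count_space refl])
  ultimately show ?thesis by (rule measurable_compose)
qed

lemma meas_bw: "(\<lambda>P. bw P v0 l n) \<in> mu \<rightarrow>\<^sub>M count_space UNIV"
proof (induction n)
  case 0
  have eq: "(\<lambda>P. bw P v0 l 0) = (\<lambda>P. (\<lambda>p. (v0, THE w. w \<in> hex_nbrs v0 \<and> p w = l)) (P v0))"
    by (simp add: port_target_def)
  show ?case unfolding eq by (rule meas_coord)
next
  case (Suc n)
  have step: "(\<lambda>P. (snd x, port_target hex_nbrs P (snd x) (P (fst x) (snd x) mod 3 + 1))) \<in> mu \<rightarrow>\<^sub>M count_space UNIV" for x :: "hexv \<times> hexv"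
  proof -
    have a: "(\<lambda>P. (snd x, port_target hex_nbrs P (snd x) j)) \<in> mu \<rightarrow>\<^sub>M count_space UNIV" for j
    proof -
      have "(\<lambda>P. (snd x, port_target hex_nbrs P (snd x) j)) =
            (\<lambda>P. (\<lambda>p. (snd x, THE w. w \<in> hex_nbrs (snd x) \<and> p w = j)) (P (snd x)))"
        by (simp add: port_target_def)
      then show ?thesis by (simp only:) (rule meas_coord)
    qed
    have b: "(\<lambda>P. P (fst x) (snd x) mod 3 + 1) \<in> mu \<rightarrow>\<^sub>M count_space UNIV"
      using meas_coord[of "\<lambda>p. p (snd x) mod 3 + 1" "fst x"] by simp
    show ?thesis
      by (rule measurable_compose_countable[where f="\<lambda>j P. (snd x, port_target hex_nbrs P (snd x) j)"
            and g="\<lambda>P. P (fst x) (snd x) mod 3 + 1", OF a b])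
  qed
  have "(\<lambda>P. bw P v0 l (Suc n)) = (\<lambda>P. (\<lambda>x P. (snd x, port_target hex_nbrs P (snd x) (P (fst x) (snd x) mod 3 + 1))) (bw P v0 l n) P)"
    by (simp add: bw_Suc)
  moreover have "(\<lambda>P. (\<lambda>x P. (snd x, port_target hex_nbrs P (snd x) (P (fst x) (snd x) mod 3 + 1))) (bw P v0 l n) P) \<in> mu \<rightarrow>\<^sub>M count_space UNIV"
    by (rule measurable_compose_countable[OF step Suc.IH])
  ultimately show ?case by simp
qed

lemma section_formula:
  assumes S: "S \<in> sets mu"
  shows "emeasure mu S = (\<integral>\<^sup>+X. emeasure (MM i) {x. X(i:=x) \<in> S} \<partial>(PiM (UNIV - {i}) MM))"
proof -
  let ?N = "PiM (UNIV - {i}) MM"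
  have ins: "insert i (UNIV - {i}) = UNIV" by auto
  have dist: "distr (MM i \<Otimes>\<^sub>M ?N) (PiM (insert i (UNIV - {i})) MM) (\<lambda>(x,X). X(i:=x)) = PiM (insert i (UNIV - {i})) MM"
    by (rule distr_pair_PiM_eq_PiM) (simp_all add: prob_space_measure_pmf)
  have F: "(\<lambda>(x,X). X(i:=x)) \<in> MM i \<Otimes>\<^sub>M ?N \<rightarrow>\<^sub>M mu"
  proof -
    have "(\<lambda>z. (snd z)(i := fst z)) \<in> MM i \<Otimes>\<^sub>M ?N \<rightarrow>\<^sub>M PiM UNIV MM"
      by (rule measurable_fun_upd[where J="UNIV - {i}"]) auto
    then show ?thesis by (simp add: random_labeling_def case_prod_beta')
  qed
  have PS: "pair_sigma_finite (MM i) ?N"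
    unfolding pair_sigma_finite_def
    by (auto intro!: prob_space_imp_sigma_finite prob_space_PiM simp: prob_space_measure_pmf)
  have "emeasure mu S = emeasure (distr (MM i \<Otimes>\<^sub>M ?N) mu (\<lambda>(x,X). X(i:=x))) S"
    using dist by (simp add: ins random_labeling_def)
  also have "\<dots> = emeasure (MM i \<Otimes>\<^sub>M ?N) ((\<lambda>(x,X). X(i:=x)) -` S \<inter> space (MM i \<Otimes>\<^sub>M ?N))"
    by (rule emeasure_distr[OF F S])
  also have "\<dots> = (\<integral>\<^sup>+X. emeasure (MM i) ((\<lambda>x. (x,X)) -` ((\<lambda>(x,X). X(i:=x)) -` S \<inter> space (MM i \<Otimes>\<^sub>M ?N))) \<partial>?N)"
    by (rule pair_sigma_finite.emeasure_pair_measure_alt2[OF PS measurable_sets[OF F S]])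
  also have "\<dots> = (\<integral>\<^sup>+X. emeasure (MM i) {x. X(i:=x) \<in> S} \<partial>?N)"
    by (rule nn_integral_cong) (auto simp: space_pair_measure intro!: arg_cong2[where f=emeasure])
  finally show ?thesis .
qed

lemma cond1:
  assumes s: "s \<in> hex_nbrs i"
  and T: "T \<in> sets mu" and Tinv: "\<And>P x. P(i := x) \<in> T \<longleftrightarrow> P \<in> T"
  and ginv: "\<And>P x. g (P(i:=x)) = g P"
  and E: "T \<inter> {P. P i s mod 3 = g P mod 3} \<in> sets mu"
  shows "emeasure mu (T \<inter> {P. P i s mod 3 = g P mod 3}) = ennreal (1/3) * emeasure mu T"
proof -
  let ?N = "PiM (UNIV - {i}) MM"
  define T' where "T' = {X \<in> space ?N. X(i:=undefined) \<in> T}"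
  have upd: "(\<lambda>X. X(i:=undefined)) \<in> ?N \<rightarrow>\<^sub>M mu"
  proof -
    have "(\<lambda>X. (id X)(i := (\<lambda>_. undefined) X)) \<in> ?N \<rightarrow>\<^sub>M PiM UNIV MM"
      by (rule measurable_fun_upd[where J="UNIV - {i}"]) auto
    then show ?thesis by (simp add: random_labeling_def)
  qed
  have T'm: "T' \<in> sets ?N"
  proof -
    have "(\<lambda>X. X(i:=undefined)) -` T \<inter> space ?N \<in> sets ?N" by (rule measurable_sets[OF upd T])
    moreover have "(\<lambda>X. X(i:=undefined)) -` T \<inter> space ?N = T'" unfolding T'_def by auto
    ultimately show ?thesis by simp
  qed
  have inT: "X(i:=x) \<in> T \<longleftrightarrow> X \<in> T'" if "X \<in> space ?N" for X x
    using that Tinv[of X x] Tinv[of X undefined] unfolding T'_def by auto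
  have one: "emeasure (MM i) {x. X(i:=x) \<in> T} = indicator T' X" if "X \<in> space ?N" for X
  proof (cases "X \<in> T'")
    case True
    then have "{x. X(i:=x) \<in> T} = UNIV" using inT[OF that] by auto
    then show ?thesis using True by (simp add: measure_pmf.emeasure_space_1[simplified])
  next
    case False
    then have "{x. X(i:=x) \<in> T} = {}" using inT[OF that] by auto
    then show ?thesis using False by simp
  qed
  have two: "emeasure (MM i) {x. X(i:=x) \<in> T \<inter> {P. P i s mod 3 = g P mod 3}} = ennreal (1/3) * indicator T' X"
    if "X \<in> space ?N" for X
  proof (cases "X \<in> T'")
    case True
    then have "{x. X(i:=x) \<in> T \<inter> {P. P i s mod 3 = g P mod 3}} = {x. x s mod 3 = g X mod 3}"
      using inT[OF that] ginv by auto
    then show ?thesis using True class_third[OF s, of "g X mod 3"] by simp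
  next
    case False
    then have e: "{x. X(i:=x) \<in> T \<inter> {P. P i s mod 3 = g P mod 3}} = {}" using inT[OF that] by auto
    show ?thesis using False by (subst e) simp
  qed
  have "emeasure mu (T \<inter> {P. P i s mod 3 = g P mod 3}) = (\<integral>\<^sup>+X. ennreal (1/3) * indicator T' X \<partial>?N)"
    by (subst section_formula[OF E, of i]) (rule nn_integral_cong, rule two, simp)
  also have "\<dots> = ennreal (1/3) * emeasure ?N T'"
    using T'm by (simp add: nn_integral_cmult)
  also have "emeasure ?N T' = emeasure mu T"
  proof -
    have "emeasure mu T = (\<integral>\<^sup>+X. emeasure (MM i) {x. X(i:=x) \<in> T} \<partial>?N)"
      by (rule section_formula[OF T])
    also have "\<dots> = (\<integral>\<^sup>+X. indicator T' X \<partial>?N)"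
      by (rule nn_integral_cong) (simp add: one)
    also have "\<dots> = emeasure ?N T'" using T'm by simp
    finally show ?thesis by simp
  qed
  finally show ?thesis .
qed

lemma sets_bw: "{P. \<Phi> (bw P v0 l n)} \<in> sets mu"
proof -
  have "(\<lambda>P. bw P v0 l n) -` {x. \<Phi> x} \<inter> space mu \<in> sets mu"
    by (rule measurable_sets[OF meas_bw]) simp
  then show ?thesis by (simp add: vimage_def)
qed

lemma sets_bw2: "{P. \<Phi> (bw P v0 l m) (bw P v0 l n)} \<in> sets mu"
proof -
  have "{P. \<Phi> (bw P v0 l m) (bw P v0 l n)} = (\<Union>x. {P. bw P v0 l m = x} \<inter> {P. \<Phi> x (bw P v0 l n)})"
    by auto
  also have "\<dots> \<in> sets mu"
  proof -
    have "{P. bw P v0 l m = x} \<inter> {P. \<Phi> x (bw P v0 l n)} \<in> sets mu" for x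
      using sets_bw[of "\<lambda>y. y = x" v0 l m] sets_bw[of "\<Phi> x" v0 l n] by blast
    then show ?thesis by (intro sets.countable_UN') auto
  qed
  finally show ?thesis .
qed

lemma sets_coord: "{P. \<Phi> (P v)} \<in> sets mu"
proof -
  have "(\<lambda>P. P v) -` {x. \<Phi> x} \<inter> space mu \<in> sets mu"
    by (rule measurable_sets[OF meas_coord[of "\<lambda>x. x"]]) simp
  then show ?thesis by (simp add: vimage_def)
qed

lemma sets_coord2: "{P. \<Phi> (P a b) (P c d)} \<in> sets mu"
proof -
  have "{P. \<Phi> (P a b) (P c d)} = (\<Union>x. {P. P a b = x} \<inter> {P. \<Phi> x (P c d)})"
    by auto
  also have "\<dots> \<in> sets mu"
  proof -
    have "{P. P a b = x} \<inter> {P. \<Phi> x (P c d)} \<in> sets mu" for x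
      using sets_coord[of "\<lambda>p. p b = x" a] sets_coord[of "\<lambda>p. \<Phi> x (p d)" c] by blast
    then show ?thesis by (intro sets.countable_UN') auto
  qed
  finally show ?thesis .
qed

definition RR :: "(hexv \<Rightarrow> int) \<Rightarrow> hexv \<Rightarrow> nat \<Rightarrow> int \<Rightarrow> (hexv \<Rightarrow> hexv \<Rightarrow> nat) set" where
  "RR f v0 l M = {P. \<exists>n. f (snd (bw P v0 l n)) \<ge> M}"

definition HH :: "(hexv \<Rightarrow> int) \<Rightarrow> hexv \<Rightarrow> nat \<Rightarrow> int \<Rightarrow> hexv \<Rightarrow> (hexv \<Rightarrow> hexv \<Rightarrow> nat) set" where
  "HH f v0 l M c = {P. \<exists>n. snd (bw P v0 l n) = c \<and> (\<forall>m<n. f (snd (bw P v0 l m)) < M)}"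

lemma RR_sets: "RR f v0 l M \<in> sets mu"
proof -
  have "RR f v0 l M = (\<Union>n. {P. f (snd (bw P v0 l n)) \<ge> M})" unfolding RR_def by auto
  also have "\<dots> \<in> sets mu"
    using sets_bw[of "\<lambda>y. f (snd y) \<ge> M" v0 l] by (intro sets.countable_UN') auto
  finally show ?thesis .
qed

lemma HH_sets: "HH f v0 l M c \<in> sets mu"
proof -
  have "HH f v0 l M c = (\<Union>n. {P. snd (bw P v0 l n) = c} \<inter> (\<Inter>m\<in>{..<n}. {P. f (snd (bw P v0 l m)) < M}))"
    unfolding HH_def by auto
  also have "\<dots> \<in> sets mu"
  proof -
    have "(\<Inter>m\<in>{..<n}. {P. f (snd (bw P v0 l m)) < M}) \<in> sets mu" for n
    proof (cases "n = 0")
      case True then show ?thesis using sets.top[of mu] by simp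
    next
      case False then show ?thesis
        using sets_bw[of "\<lambda>y. f (snd y) < M" v0 l] by (intro sets.finite_INT) auto
    qed
    moreover have "{P. snd (bw P v0 l n) = c} \<in> sets mu" for n
      using sets_bw[of "\<lambda>y. snd y = c" v0 l n] by simp
    ultimately show ?thesis by (intro sets.countable_UN') auto
  qed
  finally show ?thesis .
qed

lemma walk_local:
  assumes "\<forall>k\<le>n. P (fst (bw P v0 l k)) = Q (fst (bw P v0 l k))" "k \<le> n"
  shows "bw Q v0 l k = bw P v0 l k"
  using assms(2)
proof (induction k)
  case 0
  have "P v0 = Q v0" using assms(1) by (metis fst_bw_0 le0)
  then show ?case by (simp add: port_target_def)
next
  case (Suc k)
  have IH: "bw Q v0 l k = bw P v0 l k" using Suc by simp
  have e1: "Q (fst (bw P v0 l k)) = P (fst (bw P v0 l k))" using assms(1) Suc.prems by simp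
  have e2: "Q (snd (bw P v0 l k)) = P (snd (bw P v0 l k))"
    using assms(1) Suc.prems fst_bw_Suc by metis
  show ?case unfolding bw_Suc IH using e1 e2 by (simp add: port_target_def)
qed

lemma HH_agree:
  assumes "\<forall>v. f v < M \<longrightarrow> P v = Q v" "f v0 < M" "P \<in> HH f v0 l M c"
  shows "Q \<in> HH f v0 l M c"
proof -
  obtain n where n: "snd (bw P v0 l n) = c" "\<forall>m<n. f (snd (bw P v0 l m)) < M"
    using assms(3) unfolding HH_def by blast
  have fk: "f (fst (bw P v0 l k)) < M" if "k \<le> n" for k
  proof (cases k)
    case 0 then show ?thesis using assms(2) by simp
  next
    case (Suc k') then show ?thesis using n(2) that fst_bw_Suc by (metis Suc_le_lessD)
  qed
  have "\<forall>k\<le>n. P (fst (bw P v0 l k)) = Q (fst (bw P v0 l k))" using fk assms(1) by blast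
  then have eqs: "bw Q v0 l k = bw P v0 l k" if "k \<le> n" for k using walk_local that by blast
  have "snd (bw Q v0 l n) = c" using eqs[of n] n(1) by simp
  moreover have "\<forall>m<n. f (snd (bw Q v0 l m)) < M" using eqs n(2) by simp
  ultimately show ?thesis unfolding HH_def by blast
qed

lemma HH_inv:
  assumes "f x \<ge> M" "f v0 < M"
  shows "P(x := q) \<in> HH f v0 l M c \<longleftrightarrow> P \<in> HH f v0 l M c"
proof
  assume h: "P(x := q) \<in> HH f v0 l M c"
  have "\<forall>v. f v < M \<longrightarrow> (P(x := q)) v = P v" using assms(1) by auto
  from HH_agree[OF this assms(2) h] show "P \<in> HH f v0 l M c" .
next
  assume h: "P \<in> HH f v0 l M c"
  have "\<forall>v. f v < M \<longrightarrow> P v = (P(x := q)) v" using assms(1) by auto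
  from HH_agree[OF this assms(2) h] show "P(x := q) \<in> HH f v0 l M c" .
qed

lemma good_step:
  assumes g: "good_fun f" and w: "w \<in> hex_nbrs v"
  shows "f w \<le> f v + 1 \<and> f w \<ge> f v - 1"
proof -
  from g have "\<forall>v. \<forall>w\<in>hex_nbrs v. f w = f v + 1 \<or> f w = f v - 1" unfolding good_fun_def by blast
  then have "f w = f v + 1 \<or> f w = f v - 1" using w by blast
  then show ?thesis by arith
qed

lemma claimA:
  assumes P: "valid P" and l: "l \<in> {1..3}" and g: "good_fun f" and M: "f v0 < M"
      and R: "P \<in> RR f v0 l (M+2)"
  shows "\<exists>c. f c = M \<and> P \<in> HH f v0 l M c \<and> \<not> star P c"
proof -
  from R obtain n1 where n1: "f (snd (bw P v0 l n1)) \<ge> M + 2" unfolding RR_def by blast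
  define n0 where "n0 = (LEAST n. f (snd (bw P v0 l n)) \<ge> M)"
  have ex: "\<exists>n. f (snd (bw P v0 l n)) \<ge> M" using n1 by (intro exI[of _ n1]) simp
  have n0: "f (snd (bw P v0 l n0)) \<ge> M" unfolding n0_def by (rule LeastI_ex[OF ex])
  have before: "f (snd (bw P v0 l m)) < M" if "m < n0" for m
    using not_less_Least[of m "\<lambda>n. f (snd (bw P v0 l n)) \<ge> M"] that unfolding n0_def by simp
  define c where "c = snd (bw P v0 l n0)"
  have ffst: "f (fst (bw P v0 l n0)) < M"
  proof (cases n0)
    case 0 then show ?thesis using M by simp
  next
    case (Suc k) then show ?thesis using before[of k] fst_bw_Suc by simp
  qed
  have "c \<in> hex_nbrs (fst (bw P v0 l n0))" unfolding c_def by (rule bw_nbr[OF P l])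
  then have "f c \<le> f (fst (bw P v0 l n0)) + 1" using good_step[OF g] by blast
  then have fc: "f c = M" using n0 ffst c_def by simp
  have H: "P \<in> HH f v0 l M c" unfolding HH_def c_def using before by blast
  have ns: "\<not> star P c"
  proof
    assume st: "star P c"
    have le: "f (snd (bw P v0 l m)) \<le> M + 1" for m
    proof (cases "n0 \<le> m")
      case True
      then have "snd (bw P v0 l m) \<in> insert c (hex_nbrs c)"
        using star_trap[OF P l st c_def[symmetric] True] by blast
      then have "snd (bw P v0 l m) = c \<or> snd (bw P v0 l m) \<in> hex_nbrs c" by simp
      then show ?thesis using good_step[OF g, of "snd (bw P v0 l m)" c] fc by auto
    next
      case False then show ?thesis using before[of m] by simp
    qed
    show False using le[of n1] n1 by simp
  qed
  show ?thesis using fc H ns by blast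
qed

lemma mod3_aux: assumes "(x::nat) < 3" "y < 3" shows "x = (y + 1) mod 3 \<longleftrightarrow> y = (x + 2) mod 3"
proof -
  have "x = 0 \<or> x = 1 \<or> x = 2" "y = 0 \<or> y = 1 \<or> y = 2" using assms by auto
  then show ?thesis by (elim disjE) simp_all
qed
lemma mod3_key: "((a::nat) mod 3 = (b + 1) mod 3) \<longleftrightarrow> (b mod 3 = (a + 2) mod 3)"
proof -
  have e1: "(b + 1) mod 3 = (b mod 3 + 1) mod 3" by (rule mod_add_left_eq[symmetric])
  have e2: "(a + 2) mod 3 = (a mod 3 + 2) mod 3" by (rule mod_add_left_eq[symmetric])
  show ?thesis unfolding e1 e2 by (rule mod3_aux) auto
qed

lemma star_sets: "{P. star P c} \<in> sets mu"
proof -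
  obtain a b d where nb: "hex_nbrs c = {a,b,d}" using hex_three by blast
  have "{P. star P c} = {P. P a c mod 3 = (P c a + 1) mod 3} \<inter> {P. P b c mod 3 = (P c b + 1) mod 3}
        \<inter> {P. P d c mod 3 = (P c d + 1) mod 3}"
    unfolding star_def nb by auto
  also have "\<dots> \<in> sets mu"
    using sets_coord2[of "\<lambda>x y. x mod 3 = (y + 1) mod 3" a c c a]
      sets_coord2[of "\<lambda>x y. x mod 3 = (y + 1) mod 3" b c c b]
      sets_coord2[of "\<lambda>x y. x mod 3 = (y + 1) mod 3" d c c d]
    by (intro sets.Int) auto
  finally show ?thesis .
qed

lemma ennr_t1: "0 \<le> (r::real) \<Longrightarrow> ennreal (1/3) * (ennreal (1/3) * (ennreal (1/3) * ennreal r)) = ennreal (r/27)"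
  by (simp add: ennreal_mult[symmetric])

lemma ennr_t2: "0 \<le> (r::real) \<Longrightarrow> ennreal r - ennreal (r / 27) = ennreal (26/27) * ennreal r"
  by (simp add: ennreal_minus ennreal_mult[symmetric])

lemma claimC:
  assumes g: "good_fun f" and M: "f v0 < M" and fc: "f c = M" and odd: "odd M"
  shows "emeasure mu (HH f v0 l M c - {P. star P c}) \<le> ennreal (26/27) * emeasure mu (HH f v0 l M c)"
proof -
  interpret prob_space mu by (rule prob_mu)
  from g have "\<forall>c. odd (f c) \<longrightarrow> (\<exists>u w1 w2. hex_nbrs c = {u,w1,w2} \<and> u \<noteq> w1 \<and> u \<noteq> w2 \<and> w1 \<noteq> w2 \<and>
         f u = f c - 1 \<and> f w1 = f c + 1 \<and> f w2 = f c + 1)" unfolding good_fun_def by blast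
  note A = this
  have oc: "odd (f c)" using odd fc by simp
  have "\<exists>u w1 w2. hex_nbrs c = {u,w1,w2} \<and> u \<noteq> w1 \<and> u \<noteq> w2 \<and> w1 \<noteq> w2 \<and>
         f u = f c - 1 \<and> f w1 = f c + 1 \<and> f w2 = f c + 1" using A[rule_format, OF oc] .
  then obtain u w1 w2 where nb: "hex_nbrs c = {u,w1,w2}" and d: "u \<noteq> w1" "u \<noteq> w2" "w1 \<noteq> w2"
     and fw1: "f w1 = f c + 1" and fw2: "f w2 = f c + 1"
    by blast
  have cu: "c \<noteq> u" "c \<noteq> w1" "c \<noteq> w2" using nb hex_irrefl[of c] by auto
  have un: "u \<in> hex_nbrs c" "c \<in> hex_nbrs w1" "c \<in> hex_nbrs w2" using nb hex_sym by auto
  define H where "H = HH f v0 l M c"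
  define E1 where "E1 = {P::hexv\<Rightarrow>hexv\<Rightarrow>nat. P c u mod 3 = (P u c + 2) mod 3}"
  define E2 where "E2 = {P::hexv\<Rightarrow>hexv\<Rightarrow>nat. P w1 c mod 3 = (P c w1 + 1) mod 3}"
  define E3 where "E3 = {P::hexv\<Rightarrow>hexv\<Rightarrow>nat. P w2 c mod 3 = (P c w2 + 1) mod 3}"
  have starE: "{P. star P c} = E1 \<inter> E2 \<inter> E3"
  proof -
    have "star P c \<longleftrightarrow> P \<in> E1 \<inter> E2 \<inter> E3" for P
    proof -
      have "star P c \<longleftrightarrow> P u c mod 3 = (P c u + 1) mod 3 \<and> P w1 c mod 3 = (P c w1 + 1) mod 3
             \<and> P w2 c mod 3 = (P c w2 + 1) mod 3" unfolding star_def nb by simp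
      also have "\<dots> \<longleftrightarrow> P \<in> E1 \<inter> E2 \<inter> E3"
        unfolding E1_def E2_def E3_def mod3_key[of "P u c" "P c u"] by simp
      finally show ?thesis .
    qed
    then show ?thesis by blast
  qed
  have Hs: "H \<in> sets mu" unfolding H_def by (rule HH_sets)
  have E1s: "E1 \<in> sets mu" unfolding E1_def using sets_coord2[of "\<lambda>x y. x mod 3 = (y + 2) mod 3" c u u c] by simp
  have E2s: "E2 \<in> sets mu" unfolding E2_def using sets_coord2[of "\<lambda>x y. x mod 3 = (y + 1) mod 3" w1 c c w1] by simp
  have E3s: "E3 \<in> sets mu" unfolding E3_def using sets_coord2[of "\<lambda>x y. x mod 3 = (y + 1) mod 3" w2 c c w2] by simp
  have s1: "emeasure mu (H \<inter> E1) = ennreal (1/3) * emeasure mu H"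
    unfolding E1_def
  proof (rule cond1[where s=u and i=c and g="\<lambda>P. P u c + 2"])
    show "u \<in> hex_nbrs c" by (rule un)
    show "H \<in> sets mu" by (rule Hs)
    show "P(c := x) \<in> H \<longleftrightarrow> P \<in> H" for P x unfolding H_def by (rule HH_inv) (use fc M in auto)
    show "(P(c := x)) u c + 2 = P u c + 2" for P x using cu by simp
    show "H \<inter> {P. P c u mod 3 = (P u c + 2) mod 3} \<in> sets mu" using Hs E1s unfolding E1_def by blast
  qed
  have s2: "emeasure mu (H \<inter> E1 \<inter> E2) = ennreal (1/3) * emeasure mu (H \<inter> E1)"
    unfolding E2_def
  proof (rule cond1[where s=c and i=w1 and g="\<lambda>P. P c w1 + 1"])
    show "c \<in> hex_nbrs w1" by (rule un)
    show "H \<inter> E1 \<in> sets mu" using Hs E1s by blast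
    show "P(w1 := x) \<in> H \<inter> E1 \<longleftrightarrow> P \<in> H \<inter> E1" for P x
      using HH_inv[of M f w1 v0 P x l c] fw1 fc M cu d unfolding H_def E1_def by auto
    show "(P(w1 := x)) c w1 + 1 = P c w1 + 1" for P x using cu by simp
    show "H \<inter> E1 \<inter> {P. P w1 c mod 3 = (P c w1 + 1) mod 3} \<in> sets mu" using Hs E1s E2s unfolding E2_def by blast
  qed
  have s3: "emeasure mu (H \<inter> E1 \<inter> E2 \<inter> E3) = ennreal (1/3) * emeasure mu (H \<inter> E1 \<inter> E2)"
    unfolding E3_def
  proof (rule cond1[where s=c and i=w2 and g="\<lambda>P. P c w2 + 1"])
    show "c \<in> hex_nbrs w2" by (rule un)
    show "H \<inter> E1 \<inter> E2 \<in> sets mu" using Hs E1s E2s by blast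
    show "P(w2 := x) \<in> H \<inter> E1 \<inter> E2 \<longleftrightarrow> P \<in> H \<inter> E1 \<inter> E2" for P x
      using HH_inv[of M f w2 v0 P x l c] fw2 fc M cu d unfolding H_def E1_def E2_def by auto
    show "(P(w2 := x)) c w2 + 1 = P c w2 + 1" for P x using cu by simp
    show "H \<inter> E1 \<inter> E2 \<inter> {P. P w2 c mod 3 = (P c w2 + 1) mod 3} \<in> sets mu"
      using Hs E1s E2s E3s unfolding E3_def by blast
  qed
  define r where "r = measure mu H"
  have r0: "r \<ge> 0" unfolding r_def by (rule measure_nonneg)
  have eH: "emeasure mu H = ennreal r" unfolding r_def by (rule emeasure_eq_measure)
  have HS: "H \<inter> {P. star P c} = H \<inter> E1 \<inter> E2 \<inter> E3" unfolding starE by blast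
  have "emeasure mu (H \<inter> {P. star P c}) = emeasure mu (H \<inter> E1 \<inter> E2 \<inter> E3)" unfolding HS ..
  also have "\<dots> = ennreal (1/3) * emeasure mu (H \<inter> E1 \<inter> E2)" by (rule s3)
  also have "\<dots> = ennreal (1/3) * (ennreal (1/3) * emeasure mu (H \<inter> E1))" by (simp only: s2)
  also have "\<dots> = ennreal (1/3) * (ennreal (1/3) * (ennreal (1/3) * emeasure mu H))" by (simp only: s1)
  also have "\<dots> = ennreal (1/3) * (ennreal (1/3) * (ennreal (1/3) * ennreal r))" by (simp only: eH)
  also have "\<dots> = ennreal (r / 27)" using r0 by (rule ennr_t1)
  finally have e27: "emeasure mu (H \<inter> {P. star P c}) = ennreal (r / 27)" .
  have "emeasure mu (H - {P. star P c}) = emeasure mu (H - (H \<inter> {P. star P c}))"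
    by (rule arg_cong[where f="emeasure mu"]) blast
  also have "\<dots> = emeasure mu H - emeasure mu (H \<inter> {P. star P c})"
  proof (rule emeasure_Diff)
    show "emeasure mu (H \<inter> {P. star P c}) \<noteq> \<infinity>"
      using emeasure_le_1[of "H \<inter> {P. star P c}"] by (auto simp: top_unique)
    show "H \<in> sets mu" by (rule Hs)
    show "H \<inter> {P. star P c} \<in> sets mu" using Hs star_sets[of c] by (rule sets.Int)
  qed blast
  also have "\<dots> = ennreal r - ennreal (r / 27)" by (simp only: eH e27)
  also have "\<dots> = ennreal (26/27) * ennreal r" using r0 by (rule ennr_t2)
  also have "\<dots> = ennreal (26/27) * emeasure mu H" by (simp only: eH)
  finally have "emeasure mu (H - {P. star P c}) = ennreal (26/27) * emeasure mu H" .
  then show ?thesis unfolding H_def by (rule eq_refl)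
qed

lemma AE_valid: "AE P in mu. valid P"
proof -
  have "AE P in mu. P v \<in> LL v" for v
  proof -
    have "AE p in MM v. p \<in> LL v"
      using AE_measure_pmf[of "pmf_of_set (LL v)"] by (simp add: LL_ne LL_finite)
    then show ?thesis unfolding random_labeling_def
      by (intro AE_PiM_component) (simp_all add: prob_space_measure_pmf)
  qed
  then have "AE P in mu. \<forall>v. P v \<in> LL v" by (simp add: AE_all_countable)
  then show ?thesis unfolding valid_def .
qed

lemma HH_disj:
  assumes "f c = M" "f c' = M" "P \<in> HH f v0 l M c" "P \<in> HH f v0 l M c'"
  shows "c = c'"
proof -
  obtain n where n: "snd (bw P v0 l n) = c" "\<forall>m<n. f (snd (bw P v0 l m)) < M"
    using assms(3) unfolding HH_def by blast
  obtain n' where n': "snd (bw P v0 l n') = c'" "\<forall>m<n'. f (snd (bw P v0 l m)) < M"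
    using assms(4) unfolding HH_def by blast
  have "\<not> n < n'" using n'(2) n(1) assms(1) by force
  moreover have "\<not> n' < n" using n(2) n'(1) assms(2) by force
  ultimately have "n = n'" by arith
  then show ?thesis using n n' by simp
qed

lemma recur:
  assumes l: "l \<in> {1..3}" and g: "good_fun f" and odd: "odd M" and M: "f v0 < M"
  shows "emeasure mu (RR f v0 l (M+2)) \<le> ennreal (26/27) * emeasure mu (RR f v0 l M)"
proof -
  let ?C = "{c. f c = M}"
  let ?X = "\<lambda>c. HH f v0 l M c - {P. star P c}"
  have cnt: "countable ?C" by (rule countable_subset[OF subset_UNIV]) simp
  have Xs: "?X c \<in> sets mu" for c using HH_sets star_sets by blast
  have disjH: "disjoint_family_on (\<lambda>c. HH f v0 l M c) ?C"
    unfolding disjoint_family_on_def using HH_disj by blast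
  have disjX: "disjoint_family_on ?X ?C"
    unfolding disjoint_family_on_def using HH_disj by blast
  have UXs: "(\<Union>c\<in>?C. ?X c) \<in> sets mu"
    using Xs cnt by (intro sets.countable_UN'') auto
  have sub: "AE P in mu. P \<in> RR f v0 l (M+2) \<longrightarrow> P \<in> (\<Union>c\<in>?C. ?X c)"
    using AE_valid
  proof eventually_elim
    case (elim P)
    show ?case using claimA[OF elim l g M] by blast
  qed
  have "emeasure mu (RR f v0 l (M+2)) \<le> emeasure mu (\<Union>c\<in>?C. ?X c)"
    by (rule emeasure_mono_AE[OF sub UXs])
  also have "\<dots> = (\<integral>\<^sup>+c. emeasure mu (?X c) \<partial>count_space ?C)"
    by (rule emeasure_UN_countable[OF _ cnt disjX]) (rule Xs)
  also have "\<dots> \<le> (\<integral>\<^sup>+c. ennreal (26/27) * emeasure mu (HH f v0 l M c) \<partial>count_space ?C)"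
    by (rule nn_integral_mono) (use claimC[OF g M _ odd] in auto)
  also have "\<dots> = ennreal (26/27) * (\<integral>\<^sup>+c. emeasure mu (HH f v0 l M c) \<partial>count_space ?C)"
    by (rule nn_integral_cmult) simp
  also have "(\<integral>\<^sup>+c. emeasure mu (HH f v0 l M c) \<partial>count_space ?C) = emeasure mu (\<Union>c\<in>?C. HH f v0 l M c)"
    by (rule emeasure_UN_countable[OF _ cnt disjH, symmetric]) (rule HH_sets)
  also have "ennreal (26/27) * emeasure mu (\<Union>c\<in>?C. HH f v0 l M c) \<le> ennreal (26/27) * emeasure mu (RR f v0 l M)"
  proof (rule mult_left_mono)
    show "emeasure mu (\<Union>c\<in>?C. HH f v0 l M c) \<le> emeasure mu (RR f v0 l M)"
    proof (rule emeasure_mono)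
      show "RR f v0 l M \<in> sets mu" by (rule RR_sets)
      show "(\<Union>c\<in>?C. HH f v0 l M c) \<subseteq> RR f v0 l M"
      proof
        fix P assume "P \<in> (\<Union>c\<in>?C. HH f v0 l M c)"
        then obtain c n where "f c = M" "snd (bw P v0 l n) = c" unfolding HH_def by blast
        then show "P \<in> RR f v0 l M" unfolding RR_def by (intro CollectI exI[of _ n]) simp
      qed
    qed
  qed simp
  finally show ?thesis .
qed

lemma Z_null:
  assumes l: "l \<in> {1..3}" and g: "good_fun f"
  shows "{P. \<forall>M. \<exists>n. f (snd (bw P v0 l n)) \<ge> M} \<in> null_sets mu"
proof -
  interpret prob_space mu by (rule prob_mu)
  define K where "K = nat \<bar>f v0\<bar>"
  define Mk where "Mk k = 2 * (int K + int k) + 1" for k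
  have Mk_gt: "f v0 < Mk k" for k unfolding Mk_def K_def by simp
  have Mk_odd: "odd (Mk k)" for k unfolding Mk_def by simp
  have Mk_Suc: "Mk (Suc k) = Mk k + 2" for k unfolding Mk_def by simp
  have bound: "emeasure mu (RR f v0 l (Mk k)) \<le> ennreal ((26/27)^k)" for k
  proof (induction k)
    case 0 show ?case using emeasure_le_1 by simp
  next
    case (Suc k)
    have "emeasure mu (RR f v0 l (Mk (Suc k))) \<le> ennreal (26/27) * emeasure mu (RR f v0 l (Mk k))"
      unfolding Mk_Suc by (rule recur[OF l g Mk_odd Mk_gt])
    also have "\<dots> \<le> ennreal (26/27) * ennreal ((26/27)^k)" by (rule mult_left_mono[OF Suc.IH]) simp
    also have "\<dots> = ennreal ((26/27)^Suc k)" by (simp add: ennreal_mult[symmetric])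
    finally show ?case .
  qed
  define Z where "Z = {P. \<forall>M. \<exists>n. f (snd (bw P v0 l n)) \<ge> M}"
  have Zeq: "Z = (\<Inter>M. RR f v0 l M)" unfolding Z_def RR_def by auto
  have RRs: "RR f v0 l M \<in> sets mu" for M by (rule RR_sets)
  have Zs: "Z \<in> sets mu" unfolding Zeq using RRs by (intro sets.countable_INT') auto
  have le: "measure mu Z \<le> (26/27)^k" for k
  proof -
    have "emeasure mu Z \<le> emeasure mu (RR f v0 l (Mk k))"
      by (rule emeasure_mono) (auto simp: Zeq RRs)
    then have "ennreal (measure mu Z) \<le> ennreal ((26/27)^k)" using bound[of k] by (simp add: emeasure_eq_measure)
    then show ?thesis by (simp add: ennreal_le_iff)
  qed
  have lim: "(\<lambda>k. (26/27::real)^k) \<longlonglongrightarrow> 0" by (rule LIMSEQ_power_zero) simp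
  have "measure mu Z \<le> 0" by (rule LIMSEQ_le_const[OF lim]) (use le in auto)
  then have "measure mu Z = 0" by (simp add: measure_nonneg antisym)
  then have "emeasure mu Z = 0" by (simp add: emeasure_eq_measure)
  then show ?thesis unfolding Z_def[symmetric] using Zs by (intro null_setsI)
qed

theorem theorem4p3:
  fixes v0 :: hexv and l :: nat
  assumes "l \<in> {1..deg hex_nbrs v0}"
  shows "{P \<in> space (random_labeling hex_nbrs). walk_cycles hex_nbrs P v0 l}
           \<in> sets (random_labeling hex_nbrs)
       \<and> emeasure (random_labeling hex_nbrs)
           {P \<in> space (random_labeling hex_nbrs). walk_cycles hex_nbrs P v0 l} = 1"
proof -
  interpret prob_space mu by (rule prob_mu)
  have l: "l \<in> {1..3}" using assms by simp
  let ?S = "{P \<in> space mu. walk_cycles hex_nbrs P v0 l}"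
  have Seq: "?S = (\<Union>m. \<Union>n. {P. m < n \<and> bw P v0 l m = bw P v0 l n})"
    unfolding walk_cycles_def by auto
  have Ss: "?S \<in> sets mu"
  proof -
    have "{P. m < n \<and> bw P v0 l m = bw P v0 l n} \<in> sets mu" for m n
      using sets_bw2[of "\<lambda>x y. m < n \<and> x = y" v0 l m n] by simp
    then show ?thesis unfolding Seq by (intro sets.countable_UN') auto
  qed
  have "AE P in mu. walk_cycles hex_nbrs P v0 l"
    using AE_valid AE_not_in[OF Z_null[of l hA v0, OF l good_hA]] AE_not_in[OF Z_null[of l hB v0, OF l good_hB]]
      AE_not_in[OF Z_null[of l hC v0, OF l good_hC]]
  proof eventually_elim
    case (elim P)
    show ?case
    proof (rule ccontr)
      assume "\<not> walk_cycles hex_nbrs P v0 l"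
      from unbounded[OF elim(1) this] elim(2-4) show False by auto
    qed
  qed
  then have "emeasure mu ?S = 1" by (intro emeasure_eq_1_AE Ss) auto
  with Ss show ?thesis by simp
qed

end
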